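(* Fix $p\in(1,\infty)$ and Radon measures $\mu,\nu$ on $\mathbb{R}^N$. Let $M\in W(\mathbb{R}^N)$. Then the function $\widetilde M$ on $\mathbb{R}^N\times\mathbb{R}^N$, $\widetilde M(s,t)=M(t-s)$, is a Schur multiplier on the set of restrictedly $L^p$ bounded singular kernels, with restricted Schur norm at most $\|M\|_W$.
   Context: A singular kernel on $\mathbb{R}^N$ (w.r.t. Radon measures $\mu,\nu$) is a $\mu\times\nu$-measurable function $K$ on $\mathbb{R}^N\times\mathbb{R}^N$ which is locally in $L^2(\mu\times\nu)$ off the diagonal $\{s=t\}$. It is restrictedly $L^p$ bounded with bound $C$ if $\left|\int K(s,t)f(t)g(s)\,d\mu(t)\,d\nu(s)\right|\le C\|f\|_{L^p(\mu)}\|g\|_{L^{p'}(\nu)}$ ($1/p+1/p'=1$) for all bounded Borel $f,g$ with compact supports at positive distance from each other. A function $M$ on $\mathbb{R}^N\times\mathbb{R}^N$ is a Schur multiplier on the set of restrictedly $L^p$ bounded singular kernels if there is $C_1$ such that for every restrictedly $L^p$ bounded singular kernel $K$ with bound $C$, the kernel $MK$ is restrictedly $L^p$ bounded with bound $C_1C$; the least such $C_1$ is the restricted Schur norm of $M$. The Wiener algebra $W(\mathbb{R}^N)$ is the set of functions $f=\widehat h$ with $h\in L^1(\mathbb{R}^N)$, normed by $\|f\|_W=\|h\|_{L^1}$, where $\widehat h(s)=\int h(x)e^{-is\cdot x}dx$. *)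

theory Defs
  imports "HOL-Analysis.Analysis"
begin

text \<open>Radon measure on a Euclidean space: a Borel measure finite on compact sets
  (on R^N local finiteness implies regularity).\<close>
definition radon_measure :: "'a::euclidean_space measure \<Rightarrow> bool" where
  "radon_measure m \<longleftrightarrow> sets m = sets borel \<and> (\<forall>S. compact S \<longrightarrow> emeasure m S < \<infinity>)"

definition Lp_norm :: "'a measure \<Rightarrow> real \<Rightarrow> ('a \<Rightarrow> complex) \<Rightarrow> real" where
  "Lp_norm m p f = (integral\<^sup>L m (\<lambda>x. norm (f x) powr p)) powr (1 / p)"

definition conj_exp :: "real \<Rightarrow> real" where
  "conj_exp p = p / (p - 1)"

definition test_fun_on :: "('a::euclidean_space \<Rightarrow> complex) \<Rightarrow> 'a set \<Rightarrow> bool" where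
  "test_fun_on f S \<longleftrightarrow> f \<in> borel_measurable borel \<and> bounded (range f) \<and> compact S
      \<and> (\<forall>x. x \<notin> S \<longrightarrow> f x = 0)"

text \<open>Singular kernel: a (completion-)measurable function on pairs (s,t), with s
  integrated against nu and t against mu, locally L^2 off the diagonal.\<close>
definition singular_kernel ::
  "'a::euclidean_space measure \<Rightarrow> 'a measure \<Rightarrow> ('a \<times> 'a \<Rightarrow> complex) \<Rightarrow> bool" where
  "singular_kernel mu nu K \<longleftrightarrow>
     K \<in> borel_measurable (completion (nu \<Otimes>\<^sub>M mu)) \<and>
     (\<forall>C. compact C \<and> C \<inter> {z. fst z = snd z} = {} \<longrightarrow>
        integrable (completion (nu \<Otimes>\<^sub>M mu)) (\<lambda>z. indicator C z * (norm (K z))\<^sup>2))"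

definition restr_Lp_bounded ::
  "'a::euclidean_space measure \<Rightarrow> 'a measure \<Rightarrow> real \<Rightarrow> ('a \<times> 'a \<Rightarrow> complex) \<Rightarrow> real \<Rightarrow> bool" where
  "restr_Lp_bounded mu nu p K C \<longleftrightarrow> singular_kernel mu nu K \<and>
     (\<forall>f g Sf Sg. test_fun_on f Sf \<and> test_fun_on g Sg \<and>
        (\<exists>\<delta>>0. \<forall>x\<in>Sf. \<forall>y\<in>Sg. \<delta> \<le> dist x y) \<longrightarrow>
        norm (integral\<^sup>L (completion (nu \<Otimes>\<^sub>M mu)) (\<lambda>(s,t). K (s,t) * f t * g s))
          \<le> C * Lp_norm mu p f * Lp_norm nu (conj_exp p) g)"

definition schur_const ::
  "'a::euclidean_space measure \<Rightarrow> 'a measure \<Rightarrow> real \<Rightarrow> ('a \<times> 'a \<Rightarrow> complex) \<Rightarrow> real \<Rightarrow> bool" where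
  "schur_const mu nu p M C1 \<longleftrightarrow> 0 \<le> C1 \<and>
     (\<forall>K C. restr_Lp_bounded mu nu p K C \<longrightarrow> restr_Lp_bounded mu nu p (\<lambda>z. M z * K z) (C1 * C))"

definition restr_schur_multiplier ::
  "'a::euclidean_space measure \<Rightarrow> 'a measure \<Rightarrow> real \<Rightarrow> ('a \<times> 'a \<Rightarrow> complex) \<Rightarrow> bool" where
  "restr_schur_multiplier mu nu p M \<longleftrightarrow> (\<exists>C1. schur_const mu nu p M C1)"

definition restr_schur_norm ::
  "'a::euclidean_space measure \<Rightarrow> 'a measure \<Rightarrow> real \<Rightarrow> ('a \<times> 'a \<Rightarrow> complex) \<Rightarrow> real" where
  "restr_schur_norm mu nu p M = Inf {C1. schur_const mu nu p M C1}"

definition fourier :: "('a::euclidean_space \<Rightarrow> complex) \<Rightarrow> 'a \<Rightarrow> complex" where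
  "fourier h s = integral\<^sup>L lborel (\<lambda>x. h x * cis (- (s \<bullet> x)))"

definition wiener_algebra :: "('a::euclidean_space \<Rightarrow> complex) set" where
  "wiener_algebra = {f. \<exists>h. integrable lborel h \<and> f = fourier h}"

definition wiener_norm :: "('a::euclidean_space \<Rightarrow> complex) \<Rightarrow> real" where
  "wiener_norm f = Inf {integral\<^sup>L lborel (\<lambda>x. norm (h x)) | h. integrable lborel h \<and> f = fourier h}"

end

theory Submission
  imports Defs
begin

lemma radon_space: "radon_measure m \<Longrightarrow> space m = UNIV"
  unfolding radon_measure_def by (metis sets_eq_imp_space_eq space_borel)

lemma radon_sigma_finite:
  assumes "radon_measure (m::'a::euclidean_space measure)"
  shows "sigma_finite_measure m"
proof
  have s: "sets m = sets borel" "\<And>S. compact S \<Longrightarrow> emeasure m S < \<infinity>" using assms unfolding radon_measure_def by auto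
  show "\<exists>A. countable A \<and> A \<subseteq> sets m \<and> \<Union> A = space m \<and> (\<forall>a\<in>A. emeasure m a \<noteq> \<infinity>)"
  proof (intro exI[of _ "range (\<lambda>n::nat. cball (0::'a) (real n))"] conjI)
    show "\<Union> (range (\<lambda>n::nat. cball (0::'a) (real n))) = space m"
      using radon_space[OF assms] by (auto simp: real_arch_simple)
  qed (use s in \<open>auto simp: less_top[symmetric]\<close>)
qed

lemma sets_pair_radon:
  assumes "radon_measure (nu::'a::euclidean_space measure)" "radon_measure (mu::'a measure)"
  shows "sets (nu \<Otimes>\<^sub>M mu) = sets (borel :: ('a \<times> 'a) measure)"
  using assms unfolding radon_measure_def by (metis borel_prod sets_pair_measure_cong)

lemma sigma_finite_completion:
  assumes "sigma_finite_measure M" shows "sigma_finite_measure (completion M)"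
proof -
  interpret sigma_finite_measure M by fact
  obtain A where "countable A" "A \<subseteq> sets M" "\<Union>A = space M" "\<forall>a\<in>A. emeasure M a \<noteq> \<infinity>"
    using sigma_finite_countable by blast
  then show ?thesis
    by (intro sigma_finite_measure.intro exI[of _ A]) (auto simp: emeasure_completion)
qed


lemma fourier_meas:
  fixes h :: "'a::euclidean_space \<Rightarrow> complex"
  assumes h: "h \<in> borel_measurable borel"
  shows "(\<lambda>z::('a\<times>'a). fourier h (snd z - fst z)) \<in> borel_measurable borel"
proof -
  have c: "(\<lambda>w::('a\<times>'a)\<times>'a. cis (-((snd (fst w) - fst (fst w)) \<bullet> snd w))) \<in> borel_measurable borel"
    by (intro borel_measurable_continuous_onI continuous_intros)
  have hs: "(\<lambda>w::('a\<times>'a)\<times>'a. h (snd w)) \<in> borel_measurable borel"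
  proof -
    have "snd \<in> (borel :: (('a\<times>'a)\<times>'a) measure) \<rightarrow>\<^sub>M borel"
      by (metis borel_prod measurable_snd)
    from measurable_compose[OF this h] show ?thesis by (simp add: comp_def)
  qed
  have "(\<lambda>w::('a\<times>'a)\<times>'a. h (snd w) * cis (-((snd (fst w) - fst (fst w)) \<bullet> snd w))) \<in> borel_measurable borel"
    using c hs by measurable
  then have "case_prod (\<lambda>z x. h x * cis (-((snd z - fst z) \<bullet> x))) \<in> borel_measurable (borel \<Otimes>\<^sub>M lborel)"
    by (subst measurable_cong_sets[OF sets_pair_measure_cong[OF refl sets_lborel] refl])
       (simp add: borel_prod split_beta')
  from sigma_finite_measure.borel_measurable_lebesgue_integral[OF sigma_finite_lborel this]
  show ?thesis unfolding fourier_def by simp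
qed


lemma meas_Q:
  fixes mu nu :: "'a::euclidean_space measure" and \<phi> :: "'a \<times> 'a \<Rightarrow> 'b::topological_space"
  assumes "radon_measure mu" "radon_measure nu" "\<phi> \<in> borel_measurable borel"
  shows "\<phi> \<in> borel_measurable (completion (nu \<Otimes>\<^sub>M mu))"
  using assms by (intro measurable_completion) (simp add: measurable_cong_sets[OF sets_pair_radon[OF assms(2,1)] refl])

lemma snd_borel: "snd \<in> (borel :: ('a::second_countable_topology \<times> 'b::second_countable_topology) measure) \<rightarrow>\<^sub>M borel"
  by (metis borel_prod measurable_snd)
lemma fst_borel: "fst \<in> (borel :: ('a::second_countable_topology \<times> 'b::second_countable_topology) measure) \<rightarrow>\<^sub>M borel"
  by (metis borel_prod measurable_fst)

lemma fourier_bound: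
  assumes "integrable lborel h"
  shows "norm (fourier h y) \<le> (\<integral>x. norm (h x) \<partial>lborel)"
  unfolding fourier_def
  using integral_norm_bound[of lborel "\<lambda>x. h x * cis (- (y \<bullet> x))"] by (simp add: norm_mult)

lemma test_fun_bound:
  assumes "test_fun_on f S"
  obtains B where "B \<ge> 0" "\<And>x. norm (f x) \<le> B"
proof -
  from assms obtain a where "\<forall>x. norm (f x) \<le> a" unfolding test_fun_on_def bounded_iff by auto
  moreover then have "a \<ge> 0" using norm_ge_zero order_trans by blast
  ultimately show ?thesis using that by blast
qed

lemma test_fun_mod:
  fixes f :: "'a::euclidean_space \<Rightarrow> complex"
  assumes "test_fun_on f S" "continuous_on UNIV c" "\<And>t. norm (c t) = 1"
  shows "test_fun_on (\<lambda>t. f t * c t) S"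
proof -
  obtain B where B: "\<And>x. norm (f x) \<le> B" using test_fun_bound[OF assms(1)] by blast
  have "c \<in> borel_measurable borel" using assms(2) by (intro borel_measurable_continuous_onI)
  moreover have "bounded (range (\<lambda>t. f t * c t))"
    unfolding bounded_iff using B by (auto simp: norm_mult assms(3))
  ultimately show ?thesis using assms(1) unfolding test_fun_on_def by auto
qed

lemma Lp_norm_mod:
  assumes "\<And>t. norm (c t) = 1"
  shows "Lp_norm m p (\<lambda>t. f t * c t) = Lp_norm m p f"
  unfolding Lp_norm_def by (simp add: norm_mult assms)


lemma le_sq: "(x::real) \<le> 1 + x\<^sup>2"
proof (cases "x \<le> 1")
  case True then show ?thesis using zero_le_power2[of x] by linarith
next
  case False
  then have "x * 1 \<le> x * x" by (intro mult_left_mono) auto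
  then show ?thesis by (simp add: power2_eq_square)
qed

lemma main_schur:
  fixes mu nu :: "'a::euclidean_space measure" and h :: "'a \<Rightarrow> complex"
  assumes mu: "radon_measure mu" and nu: "radon_measure nu" and h: "integrable lborel h"
  shows "schur_const mu nu p (\<lambda>(s,t). fourier h (t - s)) (\<integral>x. norm (h x) \<partial>lborel)"
proof -
  define H where "H = (\<integral>x. norm (h x) \<partial>lborel)"
  define P where "P = nu \<Otimes>\<^sub>M mu"
  define Q where "Q = completion P"
  define M' where "M' = (\<lambda>z::'a\<times>'a. fourier h (snd z - fst z))"
  have M'eq: "(\<lambda>(s,t). fourier h (t - s)) = M'" unfolding M'_def by (auto simp: fun_eq_iff)
  have H0: "0 \<le> H" unfolding H_def by simp
  have hb: "h \<in> borel_measurable borel" using borel_measurable_integrable[OF h] by (simp add: measurable_lborel1)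
  have M'Q: "M' \<in> borel_measurable Q" unfolding Q_def P_def M'_def
    by (rule meas_Q[OF mu nu fourier_meas[OF hb]])
  have M'b: "\<And>z. norm (M' z) \<le> H" unfolding M'_def H_def by (rule fourier_bound[OF h])
  have sP: "sets P = sets borel" unfolding P_def by (rule sets_pair_radon[OF nu mu])
  have spQ: "space Q = UNIV" unfolding Q_def using sets_eq_imp_space_eq[OF sP] by simp
  have setsQ: "\<And>S. S \<in> sets borel \<Longrightarrow> S \<in> sets Q" unfolding Q_def by (metis sP sets_completionI_sets)
  have sfQ: "sigma_finite_measure Q" unfolding Q_def P_def
    by (intro sigma_finite_completion sigma_finite_pair_measure radon_sigma_finite nu mu)
  have measQ: "\<And>\<phi>::'a\<times>'a\<Rightarrow>complex. \<phi> \<in> borel_measurable borel \<Longrightarrow> \<phi> \<in> borel_measurable Q"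
    unfolding Q_def P_def using meas_Q[OF mu nu] by blast
  show ?thesis
    unfolding schur_const_def M'eq H_def[symmetric]
  proof (intro conjI allI impI H0)
    fix K C assume KC: "restr_Lp_bounded mu nu p K C"
    have SK: "singular_kernel mu nu K" and KB: "\<And>(f::'a\<Rightarrow>complex) (g::'a\<Rightarrow>complex) Sf Sg. test_fun_on f Sf \<Longrightarrow> test_fun_on g Sg \<Longrightarrow>
        (\<exists>\<delta>>0. \<forall>x\<in>Sf. \<forall>y\<in>Sg. \<delta> \<le> dist x y) \<Longrightarrow>
        norm (integral\<^sup>L Q (\<lambda>(s,t). K (s,t) * f t * g s)) \<le> C * Lp_norm mu p f * Lp_norm nu (conj_exp p) g"
      using KC unfolding restr_Lp_bounded_def Q_def P_def apply blast
      using KC unfolding restr_Lp_bounded_def Q_def P_def by blast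
    have KQ: "K \<in> borel_measurable Q" and KL2: "\<And>S. compact S \<Longrightarrow> S \<inter> {z. fst z = snd z} = {} \<Longrightarrow>
        integrable Q (\<lambda>z. indicator S z * (norm (K z))\<^sup>2)"
      using SK unfolding singular_kernel_def Q_def P_def by blast+
    show "restr_Lp_bounded mu nu p (\<lambda>z. M' z * K z) (H * C)"
      unfolding restr_Lp_bounded_def
    proof (intro conjI allI impI)
      show "singular_kernel mu nu (\<lambda>z. M' z * K z)"
        unfolding singular_kernel_def P_def[symmetric] Q_def[symmetric]
      proof (intro conjI allI impI)
        show "(\<lambda>z. M' z * K z) \<in> borel_measurable Q" using M'Q KQ by measurable
        fix S :: "('a\<times>'a) set" assume S: "compact S \<and> S \<inter> {z. fst z = snd z} = {}"
        have Sb[measurable]: "S \<in> sets Q" using S by (intro setsQ borel_closed compact_imp_closed) auto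
        show "integrable Q (\<lambda>z. indicator S z * (norm (M' z * K z))\<^sup>2)"
        proof -
          have i1: "integrable Q (\<lambda>z. H\<^sup>2 * (indicator S z * (norm (K z))\<^sup>2))"
            using KL2 S by (intro integrable_mult_right) auto
          have i2: "(\<lambda>z. indicator S z * (norm (M' z * K z))\<^sup>2) \<in> borel_measurable Q"
            using M'Q KQ by measurable
          have i3: "AE z in Q. norm (indicator S z * (norm (M' z * K z))\<^sup>2) \<le> norm (H\<^sup>2 * (indicator S z * (norm (K z))\<^sup>2))"
          proof (intro AE_I2)
            fix z
            have "(norm (M' z))\<^sup>2 \<le> H\<^sup>2" using M'b[of z] by (intro power_mono) auto
            then have "(norm (M' z))\<^sup>2 * (norm (K z))\<^sup>2 \<le> H\<^sup>2 * (norm (K z))\<^sup>2"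
              by (intro mult_right_mono) auto
            then show "norm (indicator S z * (norm (M' z * K z))\<^sup>2) \<le> norm (H\<^sup>2 * (indicator S z * (norm (K z))\<^sup>2))"
              by (simp add: norm_mult power_mult_distrib indicator_def)
          qed
          show ?thesis by (rule Bochner_Integration.integrable_bound[OF i1 i2 i3])
        qed
      qed
    next
      fix f g :: "'a \<Rightarrow> complex" and Sf Sg
      assume A: "test_fun_on f Sf \<and> test_fun_on g Sg \<and> (\<exists>\<delta>>0. \<forall>x\<in>Sf. \<forall>y\<in>Sg. \<delta> \<le> dist x y)"
      then have tf: "test_fun_on f Sf" and tg: "test_fun_on g Sg"
        and sep: "\<exists>\<delta>>0. \<forall>x\<in>Sf. \<forall>y\<in>Sg. \<delta> \<le> dist x y" by auto
      obtain Bf where Bf: "Bf \<ge> 0" "\<And>x. norm (f x) \<le> Bf" using test_fun_bound[OF tf] by blast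
      obtain Bg where Bg: "Bg \<ge> 0" "\<And>x. norm (g x) \<le> Bg" using test_fun_bound[OF tg] by blast
      obtain \<delta> where \<delta>: "\<delta> > 0" "\<forall>x\<in>Sf. \<forall>y\<in>Sg. \<delta> \<le> dist x y" using sep by blast
      have fb: "f \<in> borel_measurable borel" and cSf: "compact Sf" and f0: "\<And>x. x \<notin> Sf \<Longrightarrow> f x = 0"
        using tf unfolding test_fun_on_def by auto
      have gb: "g \<in> borel_measurable borel" and cSg: "compact Sg" and g0: "\<And>x. x \<notin> Sg \<Longrightarrow> g x = 0"
        using tg unfolding test_fun_on_def by auto
      define S where "S = Sg \<times> Sf"
      have Scomp: "compact S" unfolding S_def by (rule compact_Times[OF cSg cSf])
      have Sdiag: "S \<inter> {z. fst z = snd z} = {}"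
      proof (rule ccontr)
        assume "S \<inter> {z. fst z = snd z} \<noteq> {}"
        then obtain s where "s \<in> Sg" "s \<in> Sf" unfolding S_def by auto
        then show False using \<delta> by force
      qed
      have SbP: "S \<in> sets P" unfolding sP by (rule borel_closed[OF compact_imp_closed[OF Scomp]])
      have Ssets[measurable]: "S \<in> sets Q" unfolding Q_def using SbP by simp
      have SfinQ: "emeasure Q S < \<infinity>"
      proof -
        have "emeasure Q S = emeasure P S" unfolding Q_def using SbP by simp
        also have "\<dots> = emeasure nu Sg * emeasure mu Sf" unfolding P_def S_def
          using mu nu cSf cSg unfolding radon_measure_def
          by (intro sigma_finite_measure.emeasure_pair_measure_Times[OF radon_sigma_finite[OF mu]])
             (auto intro: borel_closed compact_imp_closed)
        also have "\<dots> < \<infinity>" using mu nu cSf cSg unfolding radon_measure_def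
          by (simp add: ennreal_mult_less_top)
        finally show ?thesis .
      qed
      define G where "G = (\<lambda>z. K z * f (snd z) * g (fst z))"
      have fsQ[measurable]: "(\<lambda>z. f (snd z)) \<in> borel_measurable Q"
        using measQ[OF measurable_compose[OF snd_borel fb]] by (simp add: comp_def)
      have gfQ[measurable]: "(\<lambda>z. g (fst z)) \<in> borel_measurable Q"
        using measQ[OF measurable_compose[OF fst_borel gb]] by (simp add: comp_def)
      have KQ'[measurable]: "K \<in> borel_measurable Q" by (rule KQ)
      have GQ[measurable]: "G \<in> borel_measurable Q" unfolding G_def by measurable
      have intG: "integrable Q G"
      proof -
        have i1: "integrable Q (\<lambda>z. Bf * Bg * (indicator S z + indicator S z * (norm (K z))\<^sup>2))"
          using KL2[OF Scomp Sdiag] SfinQ Ssets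
          by (intro integrable_mult_right integrable_add integrable_real_indicator) auto
        have i3: "AE z in Q. norm (G z) \<le> norm (Bf * Bg * (indicator S z + indicator S z * (norm (K z))\<^sup>2))"
        proof (intro AE_I2)
          fix z :: "'a \<times> 'a"
          show "norm (G z) \<le> norm (Bf * Bg * (indicator S z + indicator S z * (norm (K z))\<^sup>2))"
          proof (cases "z \<in> S")
            case True
            have "norm (G z) = norm (K z) * norm (f (snd z)) * norm (g (fst z))"
              unfolding G_def by (simp add: norm_mult)
            also have "\<dots> \<le> norm (K z) * Bf * Bg"
              using Bf Bg by (intro mult_mono) auto
            also have "\<dots> \<le> (1 + (norm (K z))\<^sup>2) * Bf * Bg"
              using Bf Bg le_sq[of "norm (K z)"] by (intro mult_right_mono) auto
            finally show ?thesis using True Bf Bg by (simp add: algebra_simps)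
          next
            case False
            then have "f (snd z) = 0 \<or> g (fst z) = 0" unfolding S_def using f0 g0
              by (cases z) auto
            then show ?thesis unfolding G_def by auto
          qed
        qed
        show ?thesis by (rule Bochner_Integration.integrable_bound[OF i1 GQ i3])
      qed
      have PF: "pair_sigma_finite lborel Q"
        unfolding pair_sigma_finite_def using sigma_finite_lborel sfQ by blast
      define E where "E = (\<lambda>(x::'a) (z::'a\<times>'a). cis (-(snd z \<bullet> x)) * cis (fst z \<bullet> x))"
      have normE: "\<And>x z. norm (E x z) = 1" unfolding E_def by (simp add: norm_mult)
      define Fc where "Fc = (\<lambda>x z. h x * E x z * G z)"
      have hL[measurable]: "h \<in> borel_measurable lborel" using h by auto
      have Eb: "(\<lambda>w::'a\<times>('a\<times>'a). E (fst w) (snd w)) \<in> borel_measurable borel"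
        unfolding E_def by (intro borel_measurable_continuous_onI) (simp add: split_beta' continuous_intros)
      have sLP: "sets (lborel \<Otimes>\<^sub>M P) = sets (borel :: ('a\<times>('a\<times>'a)) measure)"
        using sets_pair_measure_cong[OF sets_lborel sP] borel_prod by metis
      have Eb2: "(\<lambda>w::'a\<times>('a\<times>'a). E (fst w) (snd w)) \<in> borel_measurable (lborel \<Otimes>\<^sub>M P)"
        using Eb by (simp add: measurable_cong_sets[OF sLP refl])
      have idQP[measurable]: "(\<lambda>z. z) \<in> Q \<rightarrow>\<^sub>M P" unfolding Q_def by (intro measurable_completion measurable_ident_sets) simp
      have idLQ: "(\<lambda>w::'a\<times>('a\<times>'a). w) \<in> lborel \<Otimes>\<^sub>M Q \<rightarrow>\<^sub>M lborel \<Otimes>\<^sub>M P"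
      proof -
        have a: "fst \<in> lborel \<Otimes>\<^sub>M Q \<rightarrow>\<^sub>M (lborel :: 'a measure)" by (rule measurable_fst)
        have b: "snd \<in> (lborel :: 'a measure) \<Otimes>\<^sub>M Q \<rightarrow>\<^sub>M P"
          using measurable_compose[OF measurable_snd idQP] by (simp add: comp_def)
        from measurable_Pair[OF a b] show ?thesis by simp
      qed
      have EQ[measurable]: "(\<lambda>w::'a\<times>('a\<times>'a). E (fst w) (snd w)) \<in> borel_measurable (lborel \<Otimes>\<^sub>M Q)"
        using measurable_compose[OF idLQ Eb2] by (simp add: comp_def)
      have FcM: "case_prod Fc \<in> borel_measurable (lborel \<Otimes>\<^sub>M Q)"
      proof -
        have "(\<lambda>w::'a\<times>('a\<times>'a). h (fst w) * E (fst w) (snd w) * G (snd w)) \<in> borel_measurable (lborel \<Otimes>\<^sub>M Q)"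
          by measurable
        then show ?thesis unfolding Fc_def by (simp add: split_beta')
      qed
      have EzQ[measurable]: "\<And>x. (\<lambda>z. E x z) \<in> borel_measurable Q"
        unfolding E_def by (intro measQ borel_measurable_continuous_onI continuous_intros)
      have integ2: "\<And>x. integrable Q (\<lambda>z. Fc x z)"
      proof -
        fix x
        have j1: "integrable Q (\<lambda>z. h x * G z)" using intG by (rule integrable_mult_right)
        have j2: "(\<lambda>z. Fc x z) \<in> borel_measurable Q" unfolding Fc_def by measurable
        have j3: "AE z in Q. norm (Fc x z) \<le> norm (h x * G z)"
          unfolding Fc_def by (intro AE_I2) (simp add: norm_mult normE)
        show "integrable Q (\<lambda>z. Fc x z)" by (rule Bochner_Integration.integrable_bound[OF j1 j2 j3])
      qed
      have integ1: "integrable lborel (\<lambda>x. \<integral>z. norm (Fc (fst (x, z)) (snd (x, z))) \<partial>Q)"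
      proof -
        have "(\<lambda>x. \<integral>z. norm (Fc (fst (x, z)) (snd (x, z))) \<partial>Q) = (\<lambda>x. norm (h x) * (\<integral>z. norm (G z) \<partial>Q))"
          unfolding Fc_def by (simp add: norm_mult normE)
        then show ?thesis using h by simp
      qed
      have IntF: "integrable (lborel \<Otimes>\<^sub>M Q) (case_prod Fc)"
        using pair_sigma_finite.Fubini_integrable[OF PF FcM] integ1 integ2 by (simp add: split_beta')
      have Fub: "(\<integral>z. (\<integral>x. Fc x z \<partial>lborel) \<partial>Q) = (\<integral>x. (\<integral>z. Fc x z \<partial>Q) \<partial>lborel)"
        by (rule pair_sigma_finite.Fubini_integral[OF PF IntF])
      have Intfst: "integrable lborel (\<lambda>x. \<integral>z. Fc x z \<partial>Q)"
        by (rule pair_sigma_finite.integrable_fst[OF PF IntF])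
      have inner1: "\<And>z. (\<integral>x. Fc x z \<partial>lborel) = M' z * G z"
      proof -
        fix z :: "'a \<times> 'a"
        have "\<And>x. Fc x z = h x * cis (-((snd z - fst z) \<bullet> x)) * G z"
          unfolding Fc_def E_def by (simp add: cis_mult inner_diff_left)
        then show "(\<integral>x. Fc x z \<partial>lborel) = M' z * G z"
          unfolding M'_def fourier_def by simp
      qed
      define I where "I = (\<lambda>x. \<integral>z. E x z * G z \<partial>Q)"
      have inner2: "\<And>x. (\<integral>z. Fc x z \<partial>Q) = h x * I x"
        unfolding Fc_def I_def by (simp add: mult.assoc)
      define B where "B = C * Lp_norm mu p f * Lp_norm nu (conj_exp p) g"
      have Ibound: "\<And>x. norm (I x) \<le> B"
      proof -
        fix x :: 'a
        have c1: "continuous_on UNIV (\<lambda>t::'a. cis (-(t \<bullet> x)))" by (intro continuous_intros)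
        have c2: "continuous_on UNIV (\<lambda>t::'a. cis (t \<bullet> x))" by (intro continuous_intros)
        have "norm (integral\<^sup>L Q (\<lambda>(s,t). K (s,t) * (f t * cis (-(t \<bullet> x))) * (g s * cis (s \<bullet> x))))
           \<le> C * Lp_norm mu p (\<lambda>t. f t * cis (-(t \<bullet> x))) * Lp_norm nu (conj_exp p) (\<lambda>s. g s * cis (s \<bullet> x))"
          by (rule KB[OF test_fun_mod[OF tf c1] test_fun_mod[OF tg c2] sep]) auto
        moreover have "(\<lambda>(s,t). K (s,t) * (f t * cis (-(t \<bullet> x))) * (g s * cis (s \<bullet> x))) = (\<lambda>z. E x z * G z)"
          unfolding E_def G_def by (auto simp: fun_eq_iff mult_ac)
        ultimately show "norm (I x) \<le> B" unfolding I_def B_def by (simp add: Lp_norm_mod)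
      qed
      have eqint: "(\<lambda>(s, t). M' (s, t) * K (s, t) * f t * g s) = (\<lambda>z. M' z * G z)"
        unfolding G_def by (auto simp: fun_eq_iff mult_ac)
      have "norm (integral\<^sup>L Q (\<lambda>z. M' z * G z)) = norm (\<integral>x. h x * I x \<partial>lborel)"
        using Fub inner1 inner2 by simp
      also have "\<dots> \<le> (\<integral>x. norm (h x) * B \<partial>lborel)"
      proof (rule Bochner_Integration.integral_norm_bound_integral)
        show "integrable lborel (\<lambda>x. h x * I x)" using Intfst inner2 by simp
        show "integrable lborel (\<lambda>x. norm (h x) * B)" using h by simp
        show "\<And>x. x \<in> space lborel \<Longrightarrow> norm (h x * I x) \<le> norm (h x) * B"
          using Ibound by (simp add: norm_mult mult_left_mono)
      qed
      also have "\<dots> = H * B" unfolding H_def by simp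
      finally show "norm (integral\<^sup>L (completion (nu \<Otimes>\<^sub>M mu)) (\<lambda>(s, t). M' (s, t) * K (s, t) * f t * g s))
         \<le> H * C * Lp_norm mu p f * Lp_norm nu (conj_exp p) g"
        unfolding eqint Q_def[symmetric] P_def[symmetric] B_def by (simp add: mult_ac)
    qed
  qed
qed


theorem lemma2p4:
  fixes mu nu :: "'a::euclidean_space measure" and p :: real and M :: "'a \<Rightarrow> complex"
  assumes "1 < p"
    and "radon_measure mu" and "radon_measure nu"
    and "M \<in> wiener_algebra"
  shows "restr_schur_multiplier mu nu p (\<lambda>(s,t). M (t - s))
       \<and> restr_schur_norm mu nu p (\<lambda>(s,t). M (t - s)) \<le> wiener_norm M"
proof -
  obtain h0 where h0: "integrable lborel h0" "M = fourier h0"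
    using assms(4) unfolding wiener_algebra_def by blast
  have sc: "\<And>h. integrable lborel h \<Longrightarrow> M = fourier h \<Longrightarrow>
      schur_const mu nu p (\<lambda>(s,t). M (t - s)) (\<integral>x. norm (h x) \<partial>lborel)"
    using main_schur[OF assms(2,3)] by blast
  have "restr_schur_multiplier mu nu p (\<lambda>(s,t). M (t - s))"
    unfolding restr_schur_multiplier_def using sc[OF h0] by blast
  moreover have "restr_schur_norm mu nu p (\<lambda>(s,t). M (t - s)) \<le> wiener_norm M"
    unfolding restr_schur_norm_def wiener_norm_def
  proof (rule cInf_mono)
    show "{integral\<^sup>L lborel (\<lambda>x. cmod (h x)) |h. integrable lborel h \<and> M = fourier h} \<noteq> {}"
      using h0 by blast
    show "bdd_below {C1. schur_const mu nu p (\<lambda>(s, t). M (t - s)) C1}"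
      unfolding schur_const_def by (rule bdd_belowI[of _ 0]) auto
    show "\<And>b. b \<in> {integral\<^sup>L lborel (\<lambda>x. cmod (h x)) |h. integrable lborel h \<and> M = fourier h} \<Longrightarrow>
         \<exists>a\<in>{C1. schur_const mu nu p (\<lambda>(s, t). M (t - s)) C1}. a \<le> b"
      using sc by blast
  qed
  ultimately show ?thesis by blast
qed

end
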